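(* In the standing setting below, suppose that $0\le\rho\le\rho_m$ in $\Omega_T$ for some constant $\rho_m>1$. Then for all $(r,t)\in\Omega_T$, $$\frac{|v(r,t)|}{r}\le\beta(\rho_m-1),\qquad |\partial_r v(r,t)|\le 2\beta(\rho_m-1).$$
   Context: Standing setting. Fix constants $L>0$, $0<R_0<L$, $\beta>0$, $T>0$. Let $R\in C^1([0,T))$ with $R(0)=R_0$ and $0<R(t)<L$, and set $\Omega_T=\{(r,t): R(t)\le r\le L,\ 0\le t<T\}$. Let $\rho\ge 0$ be a classical (continuously differentiable) function on $\Omega_T$ (the matrix density), and define the pressure $P(r,t)=P(\rho(r,t))$ where $P(\rho)=\beta(\rho-1)$ for $\rho\ge1$ and $P(\rho)=0$ for $\rho<1$. Let $v(r,t)$ be a classical function on $\Omega_T$ (twice continuously differentiable in $r$) satisfying $\frac1r\partial_r(r\,\partial_r v)-\frac{v}{r^2}=\partial_r P$ for $R(t)<r<L$, with $v(L,t)=0$, $\partial_r v(R(t),t)=P(R(t),t)$, and the free-boundary law $\dot R(t)=v(R(t),t)$. Define $Q(t)=\int_{R(t)}^L y\,P(y,t)\,dy$. *)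

theory Defs
  imports "HOL-Analysis.Analysis"
begin

definition pressure :: "real \<Rightarrow> real \<Rightarrow> real" where
  "pressure \<beta> \<rho> = (if \<rho> \<ge> 1 then \<beta> * (\<rho> - 1) else 0)"

definition OmegaT :: "(real \<Rightarrow> real) \<Rightarrow> real \<Rightarrow> real \<Rightarrow> (real \<times> real) set" where
  "OmegaT R L T = {(r, t). 0 \<le> t \<and> t < T \<and> R t \<le> r \<and> r \<le> L}"

definition classical_on :: "(real \<times> real) set \<Rightarrow> (real \<times> real \<Rightarrow> real) \<Rightarrow> bool" where
  "classical_on S f \<longleftrightarrow> (\<exists>f'. (\<forall>x\<in>S. (f has_derivative blinfun_apply (f' x)) (at x within S))
      \<and> continuous_on S f')"

end

theory Submission
  imports Defs
begin


lemma core: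
  fixes a b Pm :: real and v vr vrr P Pr :: "real \<Rightarrow> real"
  assumes ab: "0 < a" "a < b"
    and d1: "\<forall>x\<in>{a..b}. (v has_real_derivative vr x) (at x within {a..b})"
    and d2: "\<forall>x\<in>{a..b}. (vr has_real_derivative vrr x) (at x within {a..b})"
    and Pc: "continuous_on {a..b} P"
    and Pd: "\<forall>x\<in>{a<..<b}. (P has_real_derivative Pr x) (at x)"
    and eq: "\<forall>x\<in>{a<..<b}. (1/x) * (vr x + x * vrr x) - v x / x\<^sup>2 = Pr x"
    and vb: "v b = 0" and va: "vr a = P a"
    and Pb: "\<forall>x\<in>{a..b}. 0 \<le> P x \<and> P x \<le> Pm"
    and x: "x \<in> {a..b}"
  shows "\<bar>v x\<bar> / x \<le> Pm \<and> \<bar>vr x\<bar> \<le> 2 * Pm"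
proof -
  have vc: "continuous_on {a..b} v" by (rule DERIV_continuous_on) (use d1 in auto)
  have vrc: "continuous_on {a..b} vr" by (rule DERIV_continuous_on) (use d2 in auto)
  define w where "w y = vr y + v y / y - P y" for y
  have wc: "continuous_on {a..b} w"
    unfolding w_def using vc vrc Pc ab
    by (intro continuous_intros) auto
  have wd: "(w has_real_derivative 0) (at y)" if y: "a < y" "y < b" for y
  proof -
    have e: "at y within {a..b} = at y" using y by (rule at_within_Icc_at)
    have "(w has_real_derivative vrr y + (vr y * y - v y * 1) / (y*y) - Pr y) (at y)"
    proof -
      have dv: "(v has_real_derivative vr y) (at y)" using d1 y e by (metis atLeastAtMost_iff less_imp_le)
      have dvr: "(vr has_real_derivative vrr y) (at y)" using d2 y e by (metis atLeastAtMost_iff less_imp_le)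
      have dP: "(P has_real_derivative Pr y) (at y)" using Pd y by auto
      show ?thesis unfolding w_def using dv dvr dP y ab
        by (intro derivative_eq_intros) (auto simp: power2_eq_square)
    qed
    moreover have "vrr y + (vr y * y - v y * 1) / (y*y) - Pr y = 0"
    proof -
      have y0: "y \<noteq> 0" using y ab by auto
      have "(1/y) * (vr y + y * vrr y) - v y / y\<^sup>2 = Pr y" using eq y by auto
      then have "y * (y * vr y + y * (y * vrr y)) = y * (v y + y * (y * Pr y))"
        using y0 by (simp add: field_simps power2_eq_square)
      then have "y * vr y + y * (y * vrr y) = v y + y * (y * Pr y)" using y0 by simp
      then show ?thesis using y0 by (simp add: field_simps power2_eq_square)
    qed
    ultimately show ?thesis by simp
  qed
  have wconst: "w y = w a" if y: "y \<in> {a..b}" for y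
  proof -
    have c: "continuous_on {a..y} w" by (rule continuous_on_subset[OF wc]) (use y in auto)
    have "w a \<le> w y"
    proof (rule DERIV_nonneg_imp_increasing_open[of a y w, OF _ _ c])
      fix z assume "a < z" "z < y" then show "\<exists>d. (w has_real_derivative d) (at z) \<and> 0 \<le> d"
        using wd[of z] y by auto
    qed (use y in auto)
    moreover have "w a \<ge> w y"
    proof (rule DERIV_nonpos_imp_decreasing_open[of a y w, OF _ _ c])
      fix z assume "a < z" "z < y" then show "\<exists>d. (w has_real_derivative d) (at z) \<and> d \<le> 0"
        using wd[of z] y by auto
    qed (use y in auto)
    ultimately show ?thesis by simp
  qed
  define C where "C = v a / a"
  have wa: "w a = C" unfolding w_def C_def using va by simp
  have vr_eq: "vr y = C + P y - v y / y" if "y \<in> {a..b}" for y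
    using wconst[OF that] wa unfolding w_def by simp
  define g where "g y = y * v y - C * y\<^sup>2 / 2" for y
  have gc: "continuous_on {a..b} g" unfolding g_def using vc by (intro continuous_intros) auto
  have gd: "(g has_real_derivative y * P y) (at y)" if y: "a < y" "y < b" for y
  proof -
    have e: "at y within {a..b} = at y" using y by (rule at_within_Icc_at)
    have "(g has_real_derivative 1 * v y + y * vr y - C * (2 * y ^ 1) / 2) (at y)"
    proof -
      have dv: "(v has_real_derivative vr y) (at y)" using d1 y e by (metis atLeastAtMost_iff less_imp_le)
      show ?thesis unfolding g_def using dv by (intro derivative_eq_intros) auto
    qed
    moreover have "1 * v y + y * vr y - C * (2 * y ^ 1) / 2 = y * P y"
      using vr_eq[of y] y ab by (auto simp: field_simps)
    ultimately show ?thesis by simp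
  qed
  define h where "h y = g y - Pm * y\<^sup>2 / 2" for y
  have hc: "continuous_on {a..b} h" unfolding h_def using gc by (intro continuous_intros) auto
  have hd: "(h has_real_derivative y * P y - Pm * (2 * y ^ 1) / 2) (at y)" if y: "a < y" "y < b" for y
    unfolding h_def using gd[OF y] by (intro derivative_eq_intros) auto
  have gmono: "g u \<le> g y" if "a \<le> u" "u \<le> y" "y \<le> b" for u y
  proof -
    have c: "continuous_on {u..y} g" by (rule continuous_on_subset[OF gc]) (use that in auto)
    show ?thesis
    proof (rule DERIV_nonneg_imp_increasing_open[OF \<open>u \<le> y\<close> _ c])
      fix z assume "u < z" "z < y"
      then show "\<exists>d. (g has_real_derivative d) (at z) \<and> 0 \<le> d"
        using gd[of z] Pb that ab by (intro exI[of _ "z * P z"]) auto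
    qed
  qed
  have hmono: "h u \<ge> h y" if "a \<le> u" "u \<le> y" "y \<le> b" for u y
  proof -
    have c: "continuous_on {u..y} h" by (rule continuous_on_subset[OF hc]) (use that in auto)
    show ?thesis
    proof (rule DERIV_nonpos_imp_decreasing_open[OF \<open>u \<le> y\<close> _ c])
      fix z assume z: "u < z" "z < y"
      have "z * P z \<le> z * Pm" using Pb z that ab by (intro mult_left_mono) auto
      then show "\<exists>d. (h has_real_derivative d) (at z) \<and> d \<le> 0"
        using hd[of z] z that by (intro exI[of _ "z * P z - Pm * (2 * z ^ 1) / 2"]) (auto simp: mult.commute)
    qed
  qed
  have xa: "a \<le> x" "x \<le> b" using x by auto
  have ga: "g a = C * a\<^sup>2 / 2" unfolding g_def C_def using ab by (simp add: power2_eq_square)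
  have gb: "g b = - C * b\<^sup>2 / 2" unfolding g_def using vb by simp
  have A1: "g a \<le> g b" using gmono[of a b] ab by simp
  have A2: "h b \<le> h a" using hmono[of a b] ab by simp
  have Cn: "C \<le> 0"
  proof -
    have "C * (a\<^sup>2 + b\<^sup>2) \<le> 0" using A1 ga gb by (simp add: algebra_simps)
    moreover have "a\<^sup>2 + b\<^sup>2 > 0" using ab by (simp add: add_pos_pos)
    ultimately show ?thesis by (simp add: mult_le_0_iff)
  qed
  have A2': "- C * (a\<^sup>2 + b\<^sup>2) \<le> Pm * (b\<^sup>2 - a\<^sup>2)"
    using A2 ga gb unfolding h_def by (simp add: algebra_simps)
  have Pm0: "0 \<le> Pm" using Pb ab by force
  have CPm: "- C \<le> Pm"
  proof -
    have "Pm * (b\<^sup>2 - a\<^sup>2) \<le> Pm * (a\<^sup>2 + b\<^sup>2)" using Pm0 by (intro mult_left_mono) auto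
    then have "- C * (a\<^sup>2 + b\<^sup>2) \<le> Pm * (a\<^sup>2 + b\<^sup>2)" using A2' by linarith
    moreover have "a\<^sup>2 + b\<^sup>2 > 0" using ab by (simp add: add_pos_pos)
    ultimately show ?thesis by (metis mult_minus_left mult_le_cancel_right_pos)
  qed
  define y where "y = x * v x"
  have x0: "x > 0" using xa ab by linarith
  have B1: "C * a\<^sup>2 / 2 \<le> y - C * x\<^sup>2 / 2" using gmono[of a x] xa ga unfolding g_def y_def by simp
  have B2: "y - C * x\<^sup>2 / 2 - Pm * x\<^sup>2 / 2 \<le> C * a\<^sup>2 / 2 - Pm * a\<^sup>2 / 2"
    using hmono[of a x] xa ga unfolding h_def g_def y_def by simp
  have ax2: "a\<^sup>2 \<le> x\<^sup>2" using xa ab by (intro power_mono) auto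
  have t1: "- C * a\<^sup>2 \<le> - C * x\<^sup>2" using Cn ax2 by (intro mult_left_mono) auto
  have t2: "- C * x\<^sup>2 \<le> Pm * x\<^sup>2" using CPm by (intro mult_right_mono) auto
  have t3: "C * (x\<^sup>2 - a\<^sup>2) \<ge> - Pm * x\<^sup>2"
  proof -
    have "- C * (x\<^sup>2 - a\<^sup>2) \<le> Pm * (x\<^sup>2 - a\<^sup>2)" using CPm ax2 by (intro mult_right_mono) auto
    also have "\<dots> \<le> Pm * x\<^sup>2" using Pm0 ab by (intro mult_left_mono) auto
    finally show ?thesis by simp
  qed
  have f1: "C * a\<^sup>2 \<le> 0" "C * x\<^sup>2 \<le> 0" "0 \<le> Pm * a\<^sup>2" "0 \<le> Pm * x\<^sup>2"
    using Cn Pm0 by (auto simp: mult_le_0_iff)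
  have yu: "y \<le> Pm * x\<^sup>2" using B2 f1 by linarith
  have yl: "- Pm * x\<^sup>2 \<le> y" using B1 t1 t2 by linarith
  have x2: "x\<^sup>2 > 0" using x0 by simp
  have r1: "\<bar>v x\<bar> / x \<le> Pm"
  proof -
    have "\<bar>y\<bar> \<le> Pm * x\<^sup>2" using yu yl by linarith
    then have "\<bar>y\<bar> / x\<^sup>2 \<le> Pm" using x2 by (simp add: divide_le_eq)
    moreover have "\<bar>v x\<bar> / x = \<bar>y\<bar> / x\<^sup>2" using x0 unfolding y_def
      by (simp add: abs_mult power2_eq_square)
    ultimately show ?thesis by simp
  qed
  have vxx: "v x / x = y / x\<^sup>2" unfolding y_def using x0 by (simp add: power2_eq_square)
  have r2: "\<bar>vr x\<bar> \<le> 2 * Pm"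
  proof -
    have vre: "vr x = C + P x - y / x\<^sup>2" using vr_eq[OF x] vxx by simp
    have up1: "- (y / x\<^sup>2) \<le> Pm"
    proof -
      have "- Pm \<le> y / x\<^sup>2" using yl x2 by (simp add: le_divide_eq)
      then show ?thesis by linarith
    qed
    have lo: "C - y / x\<^sup>2 \<ge> - 2 * Pm"
    proof -
      have "y \<le> C * (a\<^sup>2 + x\<^sup>2) / 2 + Pm * (x\<^sup>2 - a\<^sup>2) / 2" using B2 by (simp add: field_simps)
      also have "\<dots> \<le> C * x\<^sup>2 + Pm * x\<^sup>2 + Pm * x\<^sup>2" using t3 f1
        by (simp add: field_simps)
      finally have "y \<le> (C + 2 * Pm) * x\<^sup>2" by (simp add: algebra_simps)
      then have "y / x\<^sup>2 \<le> C + 2 * Pm" using x2 by (simp add: divide_le_eq)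
      then show ?thesis by linarith
    qed
    have "0 \<le> P x" "P x \<le> Pm" using Pb x by auto
    then show ?thesis using vre up1 lo Cn by (simp add: abs_le_iff)
  qed
  show ?thesis using r1 r2 by simp
qed


theorem lemma4p4:
  fixes L R\<^sub>0 \<beta> T \<rho>\<^sub>m :: real
    and R R' :: "real \<Rightarrow> real"
    and \<rho> v vr vrr Pr :: "real \<Rightarrow> real \<Rightarrow> real"
  assumes L_pos: "L > 0" and R0: "0 < R\<^sub>0" "R\<^sub>0 < L" and beta: "\<beta> > 0" and Tpos: "T > 0"
    and R_C1: "\<forall>t\<in>{0..<T}. (R has_real_derivative R' t) (at t within {0..<T})"
    and R'_cont: "continuous_on {0..<T} R'"
    and R_init: "R 0 = R\<^sub>0"
    and R_bounds: "\<forall>t\<in>{0..<T}. 0 < R t \<and> R t < L"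
    and rho_nonneg: "\<forall>(r, t)\<in>OmegaT R L T. \<rho> r t \<ge> 0"
    and rho_classical: "classical_on (OmegaT R L T) (\<lambda>(r, t). \<rho> r t)"
    and v_cont: "continuous_on (OmegaT R L T) (\<lambda>(r, t). v r t)"
    and v_d1: "\<forall>t\<in>{0..<T}. \<forall>r\<in>{R t..L}.
                 ((\<lambda>s. v s t) has_real_derivative vr r t) (at r within {R t..L})"
    and v_d2: "\<forall>t\<in>{0..<T}. \<forall>r\<in>{R t..L}.
                 ((\<lambda>s. vr s t) has_real_derivative vrr r t) (at r within {R t..L})"
    and vrr_cont: "\<forall>t\<in>{0..<T}. continuous_on {R t..L} (\<lambda>s. vrr s t)"
    and P_deriv: "\<forall>t\<in>{0..<T}. \<forall>r\<in>{R t<..<L}.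
                 ((\<lambda>s. pressure \<beta> (\<rho> s t)) has_real_derivative Pr r t) (at r)"
    and v_eq: "\<forall>t\<in>{0..<T}. \<forall>r\<in>{R t<..<L}.
                 (1 / r) * (vr r t + r * vrr r t) - v r t / r\<^sup>2 = Pr r t"
    and v_bdry_L: "\<forall>t\<in>{0..<T}. v L t = 0"
    and v_bdry_R: "\<forall>t\<in>{0..<T}. vr (R t) t = pressure \<beta> (\<rho> (R t) t)"
    and free_bdry: "\<forall>t\<in>{0..<T}. R' t = v (R t) t"
    and rho_m: "\<rho>\<^sub>m > 1"
    and rho_bound: "\<forall>(r, t)\<in>OmegaT R L T. \<rho> r t \<le> \<rho>\<^sub>m"
  shows "\<forall>(r, t)\<in>OmegaT R L T.
           \<bar>v r t\<bar> / r \<le> \<beta> * (\<rho>\<^sub>m - 1) \<and> \<bar>vr r t\<bar> \<le> 2 * \<beta> * (\<rho>\<^sub>m - 1)"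
proof (intro ballI, clarify)
  fix r t assume rt: "(r, t) \<in> OmegaT R L T"
  have t: "t \<in> {0..<T}" and rI: "r \<in> {R t..L}" using rt by (auto simp: OmegaT_def)
  have Rt: "0 < R t" "R t < L" using R_bounds t by auto
  have pc: "continuous_on UNIV (pressure \<beta>)"
  proof -
    have "pressure \<beta> = (\<lambda>x. \<beta> * max (x - 1) 0)"
      by (rule ext) (simp add: pressure_def max_def)
    then show ?thesis by (simp add: continuous_intros)
  qed
  obtain f' where f': "\<forall>x\<in>OmegaT R L T. ((\<lambda>(r, t). \<rho> r t) has_derivative blinfun_apply (f' x)) (at x within OmegaT R L T)"
    using rho_classical unfolding classical_on_def by blast
  have rc: "continuous_on (OmegaT R L T) (\<lambda>(r, t). \<rho> r t)"
    using f' has_derivative_continuous continuous_on_eq_continuous_within by blast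
  have sub: "(\<lambda>s. (s, t)) ` {R t..L} \<subseteq> OmegaT R L T" using t by (auto simp: OmegaT_def)
  have c1: "continuous_on {R t..L} (\<lambda>s. (s, t))" by (intro continuous_intros)
  have c2: "continuous_on {R t..L} ((\<lambda>(r, t). \<rho> r t) \<circ> (\<lambda>s. (s, t)))"
    by (rule continuous_on_compose[OF c1 continuous_on_subset[OF rc sub]])
  have c3: "continuous_on {R t..L} (\<lambda>s. \<rho> s t)" using c2 by (simp add: o_def)
  have Pc: "continuous_on {R t..L} (\<lambda>s. pressure \<beta> (\<rho> s t))"
    using continuous_on_compose2[OF pc c3] by simp
  have Pb: "\<forall>x\<in>{R t..L}. 0 \<le> pressure \<beta> (\<rho> x t) \<and> pressure \<beta> (\<rho> x t) \<le> \<beta> * (\<rho>\<^sub>m - 1)"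
  proof
    fix x assume x: "x \<in> {R t..L}"
    then have "(x, t) \<in> OmegaT R L T" using t by (auto simp: OmegaT_def)
    then have "\<rho> x t \<le> \<rho>\<^sub>m" using rho_bound by auto
    then show "0 \<le> pressure \<beta> (\<rho> x t) \<and> pressure \<beta> (\<rho> x t) \<le> \<beta> * (\<rho>\<^sub>m - 1)"
      using beta rho_m by (auto simp: pressure_def intro: mult_left_mono)
  qed
  have "\<bar>v r t\<bar> / r \<le> \<beta> * (\<rho>\<^sub>m - 1) \<and> \<bar>vr r t\<bar> \<le> 2 * (\<beta> * (\<rho>\<^sub>m - 1))"
    apply (rule core[where a="R t" and b=L and v="\<lambda>s. v s t" and vr="\<lambda>s. vr s t"
          and vrr="\<lambda>s. vrr s t" and P="\<lambda>s. pressure \<beta> (\<rho> s t)" and Pr="\<lambda>s. Pr s t"])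
    using Rt v_d1 v_d2 Pc P_deriv v_eq v_bdry_L v_bdry_R Pb rI t by auto
  then show "\<bar>v r t\<bar> / r \<le> \<beta> * (\<rho>\<^sub>m - 1) \<and> \<bar>vr r t\<bar> \<le> 2 * \<beta> * (\<rho>\<^sub>m - 1)"
    by (simp add: mult.assoc)
qed

end
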